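(* Assume $\ell=d$ and that $B_1,B_2,R_1,R_2$ (and $B_1+\bar B_1,B_2+\bar B_2,R_1+\bar R_1,R_2+\bar R_2$) are invertible. Let $P^c\in\mathcal S^d$ be a solution to $0=\mathcal M(P^c)-\mathcal L(P^c)\mathcal N(P^c)^{-1}\mathcal L(P^c)^\top$. If $P^c$ and $(P^c)^{-1}+\gamma B_1R_1^{-1}B_1^\top-\gamma B_2R_2^{-1}B_2^\top$ are invertible, then $$\mathcal M(P^c)-\mathcal L(P^c)\mathcal N(P^c)^{-1}\mathcal L(P^c)^\top=Q-P^c+A^\top\Big(\frac1\gamma(P^c)^{-1}+B_1R_1^{-1}B_1^\top-B_2R_2^{-1}B_2^\top\Big)^{-1}A.$$
   Context: $\mathcal S^d$: symmetric $d\times d$ matrices. Fix $d\ge1$, $\gamma\in(0,1)$, $A,\bar A\in\mathbb R^{d\times d}$, $B_1,\bar B_1,B_2,\bar B_2\in\mathbb R^{d\times d}$, $Q\in\mathcal S^d$, symmetric $R_1,\bar R_1,R_2,\bar R_2\in\mathbb R^{d\times d}$. For $P\in\mathcal S^d$: $\mathcal M(P)=\gamma A^\top PA-P+Q$, $\mathcal L_i(P)=\gamma A^\top PB_i$, $\mathcal L_{12}(P)=\gamma B_1^\top PB_2$, $\mathcal N_1(P)=\gamma B_1^\top PB_1+R_1$, $\mathcal N_2(P)=\gamma B_2^\top PB_2-R_2$, $\mathcal L(P)=[\mathcal L_1(P),\mathcal L_2(P)]$, $\mathcal N(P)=\begin{bmatrix}\mathcal N_1(P)&\mathcal L_{12}(P)\\\mathcal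 L_{12}(P)^\top&\mathcal N_2(P)\end{bmatrix}$ (a solution of the equation is required to have $\mathcal N(P^c)$ invertible). *)

theory Defs
  imports "HOL-Analysis.Analysis"
begin

type_synonym 'n mat = "real^'n^'n"

definition Mop :: "real \<Rightarrow> 'n::finite mat \<Rightarrow> 'n mat \<Rightarrow> 'n mat \<Rightarrow> 'n mat" where
  "Mop \<gamma> A Q P = \<gamma> *\<^sub>R (transpose A ** P ** A) - P + Q"

definition Lop_i :: "real \<Rightarrow> 'n::finite mat \<Rightarrow> 'n mat \<Rightarrow> 'n mat \<Rightarrow> 'n mat" where
  "Lop_i \<gamma> A Bi P = \<gamma> *\<^sub>R (transpose A ** P ** Bi)"

definition Lop12 :: "real \<Rightarrow> 'n::finite mat \<Rightarrow> 'n mat \<Rightarrow> 'n mat \<Rightarrow> 'n mat" where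
  "Lop12 \<gamma> B1 B2 P = \<gamma> *\<^sub>R (transpose B1 ** P ** B2)"

definition Nop1 :: "real \<Rightarrow> 'n::finite mat \<Rightarrow> 'n mat \<Rightarrow> 'n mat \<Rightarrow> 'n mat" where
  "Nop1 \<gamma> B1 R1 P = \<gamma> *\<^sub>R (transpose B1 ** P ** B1) + R1"

definition Nop2 :: "real \<Rightarrow> 'n::finite mat \<Rightarrow> 'n mat \<Rightarrow> 'n mat \<Rightarrow> 'n mat" where
  "Nop2 \<gamma> B2 R2 P = \<gamma> *\<^sub>R (transpose B2 ** P ** B2) - R2"

text \<open>The d x 2d block row L(P) = [L1(P), L2(P)]; the 2d index set is 'n + 'n
  (Inl = first block, Inr = second block).\<close>
definition Lop :: "real \<Rightarrow> 'n::finite mat \<Rightarrow> 'n mat \<Rightarrow> 'n mat \<Rightarrow> 'n mat \<Rightarrow> real^('n+'n)^'n" where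
  "Lop \<gamma> A B1 B2 P = (\<chi> i j. case j of Inl b \<Rightarrow> Lop_i \<gamma> A B1 P $ i $ b
                                   | Inr b \<Rightarrow> Lop_i \<gamma> A B2 P $ i $ b)"

definition Nop :: "real \<Rightarrow> 'n::finite mat \<Rightarrow> 'n mat \<Rightarrow> 'n mat \<Rightarrow> 'n mat \<Rightarrow> 'n mat \<Rightarrow> real^('n+'n)^('n+'n)" where
  "Nop \<gamma> B1 B2 R1 R2 P = (\<chi> i j. case i of
       Inl a \<Rightarrow> (case j of Inl b \<Rightarrow> Nop1 \<gamma> B1 R1 P $ a $ b | Inr b \<Rightarrow> Lop12 \<gamma> B1 B2 P $ a $ b)
     | Inr a \<Rightarrow> (case j of Inl b \<Rightarrow> transpose (Lop12 \<gamma> B1 B2 P) $ a $ b | Inr b \<Rightarrow> Nop2 \<gamma> B2 R2 P $ a $ b))"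

definition Ric :: "real \<Rightarrow> 'n::finite mat \<Rightarrow> 'n mat \<Rightarrow> 'n mat \<Rightarrow> 'n mat \<Rightarrow> 'n mat \<Rightarrow> 'n mat \<Rightarrow> 'n mat \<Rightarrow> 'n mat" where
  "Ric \<gamma> A B1 B2 Q R1 R2 P = Mop \<gamma> A Q P
      - Lop \<gamma> A B1 B2 P ** matrix_inv (Nop \<gamma> B1 B2 R1 R2 P) ** transpose (Lop \<gamma> A B1 B2 P)"

end

theory Submission
  imports Defs
begin

lemma sum_UNIV_Plus: "(\<Sum>k\<in>(UNIV::('a::finite+'b::finite) set). f k) = (\<Sum>k\<in>UNIV. f (Inl k)) + (\<Sum>k\<in>UNIV. f (Inr k))"
  by (subst UNIV_Plus_UNIV[symmetric], subst sum.Plus) (auto simp: o_def)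

definition hcat :: "real^'n^'m \<Rightarrow> real^'n^'m \<Rightarrow> real^('n+'n)^'m" where
  "hcat X Y = (\<chi> i j. case j of Inl b \<Rightarrow> X$i$b | Inr b \<Rightarrow> Y$i$b)"
definition vcat :: "real^'m^'n \<Rightarrow> real^'m^'n \<Rightarrow> real^'m^('n+'n)" where
  "vcat X Y = (\<chi> i j. case i of Inl a \<Rightarrow> X$a$j | Inr a \<Rightarrow> Y$a$j)"
definition blk :: "real^'n^'n \<Rightarrow> real^'n^'n \<Rightarrow> real^'n^'n \<Rightarrow> real^'n^'n \<Rightarrow> real^('n+'n)^('n+'n)" where
  "blk a b c d = (\<chi> i j. case i of Inl x \<Rightarrow> (case j of Inl y \<Rightarrow> a$x$y | Inr y \<Rightarrow> b$x$y)
     | Inr x \<Rightarrow> (case j of Inl y \<Rightarrow> c$x$y | Inr y \<Rightarrow> d$x$y))"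

lemma transpose_hcat: "transpose (hcat X Y) = vcat (transpose X) (transpose Y)"
  by (simp add: vec_eq_iff hcat_def vcat_def transpose_def split: sum.split)

lemma hcat_vcat: "hcat X Y ** vcat U V = X ** U + Y ** V"
  by (simp add: vec_eq_iff hcat_def vcat_def matrix_matrix_mult_def sum_UNIV_Plus)

lemma vcat_hcat: "vcat X Y ** hcat U V = blk (X ** U) (X ** V) (Y ** U) (Y ** V)"
  by (simp add: vec_eq_iff hcat_def vcat_def blk_def matrix_matrix_mult_def split: sum.split)

lemma mul_hcat: "M ** hcat X Y = hcat (M ** X) (M ** Y)"
  by (simp add: vec_eq_iff hcat_def matrix_matrix_mult_def split: sum.split)

lemma vcat_mul: "vcat X Y ** M = vcat (X ** M) (Y ** M)"
  by (simp add: vec_eq_iff vcat_def matrix_matrix_mult_def split: sum.split)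

lemma hcat_blk: "hcat X Y ** blk a b c d = hcat (X**a + Y**c) (X**b + Y**d)"
  by (simp add: vec_eq_iff hcat_def blk_def matrix_matrix_mult_def sum_UNIV_Plus split: sum.split)

lemma blk_blk: "blk a b c d ** blk a' b' c' d' = blk (a**a' + b**c') (a**b' + b**d') (c**a' + d**c') (c**b' + d**d')"
  by (simp add: vec_eq_iff blk_def matrix_matrix_mult_def sum_UNIV_Plus split: sum.split)

lemma mat1_blk: "(mat 1 :: real^('n::finite+'n)^('n+'n)) = blk (mat 1) 0 0 (mat 1)"
  by (simp add: vec_eq_iff blk_def mat_def split: sum.split)

lemma scale_blk: "c *\<^sub>R blk a b c' d = blk (c *\<^sub>R a) (c *\<^sub>R b) (c *\<^sub>R c') (c *\<^sub>R d)"
  by (simp add: vec_eq_iff blk_def split: sum.split)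

lemma add_blk: "blk a b c d + blk a' b' c' d' = blk (a + a') (b + b') (c + c') (d + d')"
  by (simp add: vec_eq_iff blk_def split: sum.split)

lemma scale_hcat: "c *\<^sub>R hcat X Y = hcat (c *\<^sub>R X) (c *\<^sub>R Y)"
  by (simp add: vec_eq_iff hcat_def split: sum.split)

lemma mm_sub_l: "(A::real^'n^'m) ** (B - C) = A ** B - A ** C"
  by (simp add: vec_eq_iff matrix_matrix_mult_def sum_subtractf algebra_simps)
lemma mm_sub_r: "((A::real^'n^'m) - B) ** C = A ** C - B ** C"
  by (simp add: vec_eq_iff matrix_matrix_mult_def sum_subtractf algebra_simps)
lemma mm_add_r: "((A::real^'n^'m) + B) ** C = A ** C + B ** C"
  by (simp add: vec_eq_iff matrix_matrix_mult_def sum.distrib algebra_simps)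
lemma mm_neg_l: "(- (A::real^'n^'m)) ** B = - (A ** B)"
  by (simp add: vec_eq_iff matrix_matrix_mult_def sum_negf)
lemma mm_neg_r: "(A::real^'n^'m) ** (- B) = - (A ** B)"
  by (simp add: vec_eq_iff matrix_matrix_mult_def sum_negf)
lemma mm_scale_l: "(c *\<^sub>R (A::real^'n^'m)) ** B = c *\<^sub>R (A ** B)"
  by (simp add: scalar_matrix_assoc)
lemma mm_scale_r: "(A::real^'n^'m) ** (c *\<^sub>R B) = c *\<^sub>R (A ** B)"
  by (simp add: matrix_scalar_ac scalar_matrix_assoc)

lemma inv_l: "invertible (A::real^'n^'n) \<Longrightarrow> matrix_inv A ** A = mat 1"
  unfolding invertible_def matrix_inv_def by (rule someI2_ex) auto
lemma inv_r: "invertible (A::real^'n^'n) \<Longrightarrow> A ** matrix_inv A = mat 1"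
  unfolding invertible_def matrix_inv_def by (rule someI2_ex) auto

lemma inv_unique:
  fixes A X :: "real^'n^'n"
  assumes "A ** X = mat 1" shows "matrix_inv A = X"
proof -
  have "X ** A = mat 1" using assms matrix_left_right_inverse by blast
  hence inv: "invertible A" using assms invertible_def by blast
  have "matrix_inv A = matrix_inv A ** (A ** X)" using assms by simp
  also have "\<dots> = (matrix_inv A ** A) ** X" by (simp add: matrix_mul_assoc)
  also have "\<dots> = X" using inv_l[OF inv] by simp
  finally show ?thesis .
qed

lemma grp4: "(a::'a::ab_group_add) + b - (c + d) = a - c + (b - d)"
  by (simp add: algebra_simps)

lemmas mm_norm = matrix_add_ldistrib mm_add_r mm_sub_l mm_sub_r mm_neg_l mm_neg_r
  mm_scale_l mm_scale_r matrix_mul_assoc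

lemma woodbury:
  fixes P :: "real^'n^'n" and B :: "real^'m^'n" and R Ri N :: "real^'m^'m" and g :: real
  assumes g: "g \<noteq> 0" and iP: "invertible P" and iN: "invertible N"
    and N: "N = g *\<^sub>R (transpose B ** P ** B) + R" and Ri: "Ri ** R = mat 1"
  shows "((1/g) *\<^sub>R matrix_inv P + B ** Ri ** transpose B) **
          (g *\<^sub>R P - (g*g) *\<^sub>R (P ** B ** matrix_inv N ** transpose B ** P)) = mat 1"
proof -
  define iN where "iN = matrix_inv N"
  define Pi where "Pi = matrix_inv P"
  have PiP: "Pi ** P = mat 1" using inv_l[OF iP] Pi_def by simp
  have NiN: "N ** iN = mat 1" using inv_r[OF iN] iN_def by simp
  have K: "Ri ** (g *\<^sub>R (transpose B ** P ** B)) ** iN = Ri - iN"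
  proof -
    have "g *\<^sub>R (transpose B ** P ** B) = N - R" using N by simp
    hence "Ri ** (g *\<^sub>R (transpose B ** P ** B)) ** iN = Ri ** (N - R) ** iN" by simp
    also have "\<dots> = Ri ** (N ** iN) - (Ri ** R) ** iN" by (simp only: mm_sub_l mm_sub_r matrix_mul_assoc)
    also have "\<dots> = Ri - iN" using NiN Ri by simp
    finally show ?thesis .
  qed
  have T1: "((1/g) *\<^sub>R Pi) ** (g *\<^sub>R P) = mat 1"
    using g PiP by (simp add: mm_scale_l mm_scale_r)
  have T2: "((1/g) *\<^sub>R Pi) ** ((g*g) *\<^sub>R (P ** B ** iN ** transpose B ** P))
      = g *\<^sub>R (B ** iN ** transpose B ** P)"
  proof -
    have "((1/g) *\<^sub>R Pi) ** ((g*g) *\<^sub>R (P ** B ** iN ** transpose B ** P))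
       = ((1/g)*(g*g)) *\<^sub>R ((Pi ** P) ** B ** iN ** transpose B ** P)"
      by (simp only: mm_scale_l mm_scale_r scaleR_scaleR matrix_mul_assoc, simp add: mult_ac)
    also have "\<dots> = g *\<^sub>R (B ** iN ** transpose B ** P)" using g PiP by simp
    finally show ?thesis .
  qed
  have T3: "(B ** Ri ** transpose B) ** (g *\<^sub>R P) = g *\<^sub>R (B ** Ri ** transpose B ** P)"
    by (simp only: mm_scale_l mm_scale_r matrix_mul_assoc)
  have T4: "(B ** Ri ** transpose B) ** ((g*g) *\<^sub>R (P ** B ** iN ** transpose B ** P))
      = g *\<^sub>R (B ** Ri ** transpose B ** P) - g *\<^sub>R (B ** iN ** transpose B ** P)"
  proof -
    have "(B ** Ri ** transpose B) ** ((g*g) *\<^sub>R (P ** B ** iN ** transpose B ** P))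
       = g *\<^sub>R (B ** (Ri ** (g *\<^sub>R (transpose B ** P ** B)) ** iN) ** transpose B ** P)"
      by (simp only: mm_scale_l mm_scale_r scaleR_scaleR matrix_mul_assoc)
    also have "\<dots> = g *\<^sub>R (B ** (Ri - iN) ** transpose B ** P)" using K by simp
    also have "\<dots> = g *\<^sub>R (B ** Ri ** transpose B ** P) - g *\<^sub>R (B ** iN ** transpose B ** P)"
      by (simp only: mm_sub_l mm_sub_r scaleR_diff_right)
    finally show ?thesis .
  qed
  have "((1/g) *\<^sub>R Pi + B ** Ri ** transpose B) **
          (g *\<^sub>R P - (g*g) *\<^sub>R (P ** B ** iN ** transpose B ** P))
      = ((1/g) *\<^sub>R Pi) ** (g *\<^sub>R P) - ((1/g) *\<^sub>R Pi) ** ((g*g) *\<^sub>R (P ** B ** iN ** transpose B ** P))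
        + ((B ** Ri ** transpose B) ** (g *\<^sub>R P) - (B ** Ri ** transpose B) ** ((g*g) *\<^sub>R (P ** B ** iN ** transpose B ** P)))"
    by (simp only: mm_add_r mm_sub_l grp4)
  also have "\<dots> = mat 1" unfolding T1 T2 T3 T4 by simp
  finally show ?thesis unfolding iN_def Pi_def .
qed

theorem mainTheorem14:
  fixes \<gamma> :: real
    and A Abar B1 B1bar B2 B2bar Q R1 R1bar R2 R2bar P :: "real^'n^'n"
  assumes "0 < \<gamma>" "\<gamma> < 1"
    and "transpose Q = Q"
    and "transpose R1 = R1" "transpose R1bar = R1bar"
    and "transpose R2 = R2" "transpose R2bar = R2bar"
    and "invertible B1" "invertible B2" "invertible R1" "invertible R2"
    and "invertible (B1 + B1bar)" "invertible (B2 + B2bar)"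
    and "invertible (R1 + R1bar)" "invertible (R2 + R2bar)"
    and "transpose P = P"
    and "invertible (Nop \<gamma> B1 B2 R1 R2 P)"
    and "Ric \<gamma> A B1 B2 Q R1 R2 P = 0"
    and "invertible P"
    and "invertible (matrix_inv P + \<gamma> *\<^sub>R (B1 ** matrix_inv R1 ** transpose B1)
                      - \<gamma> *\<^sub>R (B2 ** matrix_inv R2 ** transpose B2))"
  shows "Ric \<gamma> A B1 B2 Q R1 R2 P =
           Q - P + transpose A ** matrix_inv ((1 / \<gamma>) *\<^sub>R matrix_inv P
              + B1 ** matrix_inv R1 ** transpose B1 - B2 ** matrix_inv R2 ** transpose B2) ** A"
proof -
  note Psym = \<open>transpose P = P\<close>
  define B where "B = hcat B1 B2"
  define R where "R = blk R1 0 0 (- R2)"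
  define Ri where "Ri = blk (matrix_inv R1) 0 0 (- matrix_inv R2)"
  define N where "N = Nop \<gamma> B1 B2 R1 R2 P"
  have g: "\<gamma> \<noteq> 0" using assms(1) by simp
  have BT: "transpose B = vcat (transpose B1) (transpose B2)"
    unfolding B_def by (rule transpose_hcat)
  have tL12: "transpose (Lop12 \<gamma> B1 B2 P) = \<gamma> *\<^sub>R (transpose B2 ** P ** B1)"
    unfolding Lop12_def by (simp add: transpose_scalar matrix_transpose_mul Psym matrix_mul_assoc)
  have Nop_blk: "N = blk (Nop1 \<gamma> B1 R1 P) (Lop12 \<gamma> B1 B2 P) (transpose (Lop12 \<gamma> B1 B2 P)) (Nop2 \<gamma> B2 R2 P)"
    unfolding N_def Nop_def blk_def by (simp add: vec_eq_iff)
  have NB: "N = \<gamma> *\<^sub>R (transpose B ** P ** B) + R"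
    unfolding Nop_blk tL12 BT B_def R_def
    by (simp only: transpose_hcat vcat_mul[of _ _ P] vcat_hcat) (simp add: scale_blk add_blk Nop1_def Nop2_def Lop12_def)
  have RiR: "Ri ** R = mat 1"
    unfolding Ri_def R_def blk_blk mat1_blk
    using inv_l[OF assms(10)] inv_l[OF assms(11)] by (simp add: mm_neg_l mm_neg_r)
  have BRB: "B ** Ri ** transpose B = B1 ** matrix_inv R1 ** transpose B1 - B2 ** matrix_inv R2 ** transpose B2"
    unfolding B_def Ri_def transpose_hcat hcat_blk hcat_vcat
    by (simp add: mm_neg_l mm_neg_r)
  have LB: "Lop \<gamma> A B1 B2 P = \<gamma> *\<^sub>R (transpose A ** P ** B)"
    unfolding B_def mul_hcat scale_hcat by (simp add: Lop_def hcat_def Lop_i_def vec_eq_iff)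
  have LTB: "transpose (Lop \<gamma> A B1 B2 P) = \<gamma> *\<^sub>R (transpose B ** P ** A)"
    unfolding LB by (simp add: transpose_scalar matrix_transpose_mul Psym matrix_mul_assoc)
  have W: "((1/\<gamma>) *\<^sub>R matrix_inv P + B ** Ri ** transpose B) **
          (\<gamma> *\<^sub>R P - (\<gamma>*\<gamma>) *\<^sub>R (P ** B ** matrix_inv N ** transpose B ** P)) = mat 1"
    by (rule woodbury[OF g assms(19) _ NB RiR]) (use assms(17) N_def in simp)
  have X: "matrix_inv ((1 / \<gamma>) *\<^sub>R matrix_inv P
              + B1 ** matrix_inv R1 ** transpose B1 - B2 ** matrix_inv R2 ** transpose B2)
        = \<gamma> *\<^sub>R P - (\<gamma>*\<gamma>) *\<^sub>R (P ** B ** matrix_inv N ** transpose B ** P)"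
    using inv_unique[OF W] unfolding BRB by (simp add: add_diff_eq)
  have "Ric \<gamma> A B1 B2 Q R1 R2 P = \<gamma> *\<^sub>R (transpose A ** P ** A) - P + Q
      - (\<gamma>*\<gamma>) *\<^sub>R (transpose A ** P ** B ** matrix_inv N ** transpose B ** P ** A)"
    unfolding Ric_def Mop_def LTB N_def[symmetric] unfolding LB
    by (simp only: mm_scale_l mm_scale_r scaleR_scaleR matrix_mul_assoc)
  also have "\<dots> = Q - P + transpose A ** (\<gamma> *\<^sub>R P - (\<gamma>*\<gamma>) *\<^sub>R (P ** B ** matrix_inv N ** transpose B ** P)) ** A"
    by (simp only: mm_sub_l mm_sub_r mm_scale_l mm_scale_r matrix_mul_assoc) (simp add: algebra_simps)
  finally show ?thesis unfolding X .
qed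

end
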